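(* For every class of closed formulas $\mathbb{P}$ and every $n$, every safety problem provable in $\mathbf{FBI}^{\mathbb{P}}_n$ is also provable in $\mathbf{F}^{\mathbb{P}_n}$, where $\mathbb{P}_n$ consists of all Boolean combinations of at most $n$ predicates from $\mathbb{P}$. Moreover, for every $n>0$ there exist a class of predicates $\mathbb{P}$ and a safety problem $\Pi$ such that $\Pi$ is provable in $\mathbf{FBI}^{\mathbb{P}}_n$ but is provable in none of $\mathbf{FBI}^{\mathbb{P}}_{n-1}$, $\mathbf{FI}^{\mathbb{P}}$, $\mathbf{F}^{\mathbb{P}}$.
   Context: A first-order vocabulary $\Sigma$ consists of constant, function and relation symbols; $\Sigma'=\{a' : a\in\Sigma\}$ is a disjoint copy, and for a formula $\varphi$ over $\Sigma$, $\varphi'$ denotes $\varphi$ with every symbol replaced by its primed copy. A safety problem is a triple $(\iota,\tau,\beta)$, where $\iota,\beta$ are closed formulas over $\Sigma$ and $\tau$ is a closed formula over $\Sigma\uplus\Sigma'$. $A\Rightarrow B$ means the implication $A\to B$ is valid. $\tau^{-1}$ denotes $\tau$ with each symbol of $\Sigma$ and its primed counterpart swapped. Proofs: a proof of $\Pi$ in a system is a finite tree whose nodes are safety problems, whose root is $\Pi$, and in which each node together with its children is an instance of one of the system's rules, with side conditions valid. Rules ($\varphi$ ranges over closed formulas over $\Sigma$): (Ind): no premises; conclusion $(\iota,\tau,\neg\varphi)$; side conditions $\iota\Rightarrow\varphi$ and $\varphi\wedge\tau\Rightarrow\varphi'$. (Cons): premise $(\iota,\tau,\neg\varphi)$; conclusion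 $(\iota,\tau,\beta)$; side condition $\varphi\Rightarrow\neg\beta$. (Inc): premises $(\iota,\tau,\neg\varphi)$ and $(\iota\wedge\varphi,\ \tau\wedge\varphi\wedge\varphi',\ \beta\wedge\varphi)$; conclusion $(\iota,\tau,\beta)$. (Rev): premise $(\beta,\tau^{-1},\iota)$; conclusion $(\iota,\tau,\beta)$. $\mathbf{F}=\{$Ind, Cons$\}$, $\mathbf{FI}=\mathbf{F}\cup\{$Inc$\}$, $\mathbf{FBI}=\mathbf{FI}\cup\{$Rev$\}$. For a class of closed formulas $\mathbb{P}$, $X^{\mathbb{P}}$ denotes system $X$ with applications of (Ind) restricted to $\varphi\in\mathbb{P}$, and $X^{\mathbb{P}}_n$ further restricts proofs to at most $n$ applications of (Ind). *)

theory Defs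
  imports Main
begin

text \<open>A symbol of the base vocabulary is a pair (name, arity); constants are
function symbols of arity 0. A symbol occurrence additionally carries a flag
saying whether it is the primed copy.\<close>

type_synonym sym = "nat \<times> nat"
type_synonym psym = "sym \<times> bool"

text \<open>A vocabulary: function (incl. constant) symbols and relation symbols.\<close>
type_synonym vocab = "sym set \<times> sym set"

datatype trm = Var nat | App psym "trm list"

datatype fm =
    FTrue | FFalse
  | Rel psym "trm list"
  | Eq trm trm
  | Not fm
  | And fm fm
  | Or fm fm
  | Imp fm fm
  | Iff fm fm
  | All nat fm
  | Ex nat fm

fun fvt :: "trm \<Rightarrow> nat set" where
  "fvt (Var x) = {x}"
| "fvt (App f ts) = (\<Union>t\<in>set ts. fvt t)"

fun fv :: "fm \<Rightarrow> nat set" where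
  "fv FTrue = {}"
| "fv FFalse = {}"
| "fv (Rel r ts) = (\<Union>t\<in>set ts. fvt t)"
| "fv (Eq s t) = fvt s \<union> fvt t"
| "fv (Not p) = fv p"
| "fv (And p q) = fv p \<union> fv q"
| "fv (Or p q) = fv p \<union> fv q"
| "fv (Imp p q) = fv p \<union> fv q"
| "fv (Iff p q) = fv p \<union> fv q"
| "fv (All x p) = fv p - {x}"
| "fv (Ex x p) = fv p - {x}"

definition closed :: "fm \<Rightarrow> bool" where
  "closed p \<longleftrightarrow> fv p = {}"

fun trm_over :: "psym set \<Rightarrow> trm \<Rightarrow> bool" where
  "trm_over A (Var x) = True"
| "trm_over A (App f ts) = (f \<in> A \<and> length ts = snd (fst f) \<and> (\<forall>t\<in>set ts. trm_over A t))"

fun fm_over :: "psym set \<Rightarrow> psym set \<Rightarrow> fm \<Rightarrow> bool" where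
  "fm_over A B FTrue = True"
| "fm_over A B FFalse = True"
| "fm_over A B (Rel r ts) = (r \<in> B \<and> length ts = snd (fst r) \<and> (\<forall>t\<in>set ts. trm_over A t))"
| "fm_over A B (Eq s t) = (trm_over A s \<and> trm_over A t)"
| "fm_over A B (Not p) = fm_over A B p"
| "fm_over A B (And p q) = (fm_over A B p \<and> fm_over A B q)"
| "fm_over A B (Or p q) = (fm_over A B p \<and> fm_over A B q)"
| "fm_over A B (Imp p q) = (fm_over A B p \<and> fm_over A B q)"
| "fm_over A B (Iff p q) = (fm_over A B p \<and> fm_over A B q)"
| "fm_over A B (All x p) = fm_over A B p"
| "fm_over A B (Ex x p) = fm_over A B p"

definition unprimed :: "sym set \<Rightarrow> psym set" where
  "unprimed S = S \<times> {False}"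

definition both :: "sym set \<Rightarrow> psym set" where
  "both S = S \<times> UNIV"

definition over :: "vocab \<Rightarrow> fm \<Rightarrow> bool" where
  "over \<Sigma> p \<longleftrightarrow> fm_over (unprimed (fst \<Sigma>)) (unprimed (snd \<Sigma>)) p"

definition over2 :: "vocab \<Rightarrow> fm \<Rightarrow> bool" where
  "over2 \<Sigma> p \<longleftrightarrow> fm_over (both (fst \<Sigma>)) (both (snd \<Sigma>)) p"

definition cfm :: "vocab \<Rightarrow> fm \<Rightarrow> bool" where
  "cfm \<Sigma> p \<longleftrightarrow> closed p \<and> over \<Sigma> p"

fun map_syms_t :: "(bool \<Rightarrow> bool) \<Rightarrow> trm \<Rightarrow> trm" where
  "map_syms_t g (Var x) = Var x"
| "map_syms_t g (App (s, b) ts) = App (s, g b) (map (map_syms_t g) ts)"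

fun map_syms :: "(bool \<Rightarrow> bool) \<Rightarrow> fm \<Rightarrow> fm" where
  "map_syms g FTrue = FTrue"
| "map_syms g FFalse = FFalse"
| "map_syms g (Rel (s, b) ts) = Rel (s, g b) (map (map_syms_t g) ts)"
| "map_syms g (Eq s t) = Eq (map_syms_t g s) (map_syms_t g t)"
| "map_syms g (Not p) = Not (map_syms g p)"
| "map_syms g (And p q) = And (map_syms g p) (map_syms g q)"
| "map_syms g (Or p q) = Or (map_syms g p) (map_syms g q)"
| "map_syms g (Imp p q) = Imp (map_syms g p) (map_syms g q)"
| "map_syms g (Iff p q) = Iff (map_syms g p) (map_syms g q)"
| "map_syms g (All x p) = All x (map_syms g p)"
| "map_syms g (Ex x p) = Ex x (map_syms g p)"

definition prime :: "fm \<Rightarrow> fm" where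
  "prime = map_syms (\<lambda>_. True)"

text \<open>\<tau>^{-1}: swap each symbol with its primed counterpart.\<close>
definition swap :: "fm \<Rightarrow> fm" where
  "swap = map_syms (\<lambda>b. \<not> b)"

text \<open>Structures have as domain a nonempty subset of nat (i.e. all countable
structures, which suffices for validity over countable vocabularies by
Loewenheim-Skolem).\<close>

datatype struc = Struc (dom: "nat set") (funs: "psym \<Rightarrow> nat list \<Rightarrow> nat")
  (rels: "psym \<Rightarrow> nat list \<Rightarrow> bool")

definition is_struc :: "struc \<Rightarrow> bool" where
  "is_struc M \<longleftrightarrow> dom M \<noteq> {} \<and>
     (\<forall>f xs. set xs \<subseteq> dom M \<longrightarrow> funs M f xs \<in> dom M)"

fun evalt :: "struc \<Rightarrow> (nat \<Rightarrow> nat) \<Rightarrow> trm \<Rightarrow> nat" where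
  "evalt M v (Var x) = v x"
| "evalt M v (App f ts) = funs M f (map (evalt M v) ts)"

fun sat :: "struc \<Rightarrow> (nat \<Rightarrow> nat) \<Rightarrow> fm \<Rightarrow> bool" where
  "sat M v FTrue = True"
| "sat M v FFalse = False"
| "sat M v (Rel r ts) = rels M r (map (evalt M v) ts)"
| "sat M v (Eq s t) = (evalt M v s = evalt M v t)"
| "sat M v (Not p) = (\<not> sat M v p)"
| "sat M v (And p q) = (sat M v p \<and> sat M v q)"
| "sat M v (Or p q) = (sat M v p \<or> sat M v q)"
| "sat M v (Imp p q) = (sat M v p \<longrightarrow> sat M v q)"
| "sat M v (Iff p q) = (sat M v p \<longleftrightarrow> sat M v q)"
| "sat M v (All x p) = (\<forall>d\<in>dom M. sat M (v(x := d)) p)"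
| "sat M v (Ex x p) = (\<exists>d\<in>dom M. sat M (v(x := d)) p)"

definition valid :: "fm \<Rightarrow> bool" where
  "valid p \<longleftrightarrow> (\<forall>M v. is_struc M \<and> range v \<subseteq> dom M \<longrightarrow> sat M v p)"

definition entails :: "fm \<Rightarrow> fm \<Rightarrow> bool" where
  "entails A B \<longleftrightarrow> valid (Imp A B)"

type_synonym prob = "fm \<times> fm \<times> fm"

definition is_problem :: "vocab \<Rightarrow> prob \<Rightarrow> bool" where
  "is_problem \<Sigma> \<Pi> \<longleftrightarrow> (case \<Pi> of (\<iota>, \<tau>, \<beta>) \<Rightarrow>
      cfm \<Sigma> \<iota> \<and> cfm \<Sigma> \<beta> \<and> closed \<tau> \<and> over2 \<Sigma> \<tau>)"

datatype rule = RInd | RCons | RInc | RRev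

definition sysF :: "rule set" where "sysF = {RInd, RCons}"
definition sysFI :: "rule set" where "sysFI = {RInd, RCons, RInc}"
definition sysFBI :: "rule set" where "sysFBI = {RInd, RCons, RInc, RRev}"

text \<open>derivable Rs \<Sigma> P \<Pi> k: there is a proof tree of \<Pi> (over vocabulary \<Sigma>)
in the system with rule set Rs, with (Ind) restricted to \<phi> \<in> P, using exactly
k applications of (Ind).\<close>

inductive derivable :: "rule set \<Rightarrow> vocab \<Rightarrow> fm set \<Rightarrow> prob \<Rightarrow> nat \<Rightarrow> bool"
  for Rs :: "rule set" and \<Sigma> :: vocab and P :: "fm set" where
  ind: "\<lbrakk> RInd \<in> Rs; \<phi> \<in> P; cfm \<Sigma> \<phi>; is_problem \<Sigma> (\<iota>, \<tau>, Not \<phi>);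
          entails \<iota> \<phi>; entails (And \<phi> \<tau>) (prime \<phi>) \<rbrakk>
        \<Longrightarrow> derivable Rs \<Sigma> P (\<iota>, \<tau>, Not \<phi>) 1"
| cons: "\<lbrakk> RCons \<in> Rs; cfm \<Sigma> \<phi>; is_problem \<Sigma> (\<iota>, \<tau>, \<beta>);
          derivable Rs \<Sigma> P (\<iota>, \<tau>, Not \<phi>) k; entails \<phi> (Not \<beta>) \<rbrakk>
        \<Longrightarrow> derivable Rs \<Sigma> P (\<iota>, \<tau>, \<beta>) k"
| inc: "\<lbrakk> RInc \<in> Rs; cfm \<Sigma> \<phi>; is_problem \<Sigma> (\<iota>, \<tau>, \<beta>);
          derivable Rs \<Sigma> P (\<iota>, \<tau>, Not \<phi>) k1;
          derivable Rs \<Sigma> P (And \<iota> \<phi>, And \<tau> (And \<phi> (prime \<phi>)), And \<beta> \<phi>) k2 \<rbrakk>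
        \<Longrightarrow> derivable Rs \<Sigma> P (\<iota>, \<tau>, \<beta>) (k1 + k2)"
| rev: "\<lbrakk> RRev \<in> Rs; is_problem \<Sigma> (\<iota>, \<tau>, \<beta>);
          derivable Rs \<Sigma> P (\<beta>, swap \<tau>, \<iota>) k \<rbrakk>
        \<Longrightarrow> derivable Rs \<Sigma> P (\<iota>, \<tau>, \<beta>) k"

definition provable :: "rule set \<Rightarrow> vocab \<Rightarrow> fm set \<Rightarrow> prob \<Rightarrow> bool" where
  "provable Rs \<Sigma> P \<Pi> \<longleftrightarrow> (\<exists>k. derivable Rs \<Sigma> P \<Pi> k)"

definition provable_n :: "rule set \<Rightarrow> vocab \<Rightarrow> fm set \<Rightarrow> nat \<Rightarrow> prob \<Rightarrow> bool" where
  "provable_n Rs \<Sigma> P n \<Pi> \<longleftrightarrow> (\<exists>k\<le>n. derivable Rs \<Sigma> P \<Pi> k)"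

inductive bool_comb :: "fm set \<Rightarrow> fm \<Rightarrow> bool" for S where
  atom: "p \<in> S \<Longrightarrow> bool_comb S p"
| tt: "bool_comb S FTrue"
| ff: "bool_comb S FFalse"
| neg: "bool_comb S p \<Longrightarrow> bool_comb S (Not p)"
| conj: "bool_comb S p \<Longrightarrow> bool_comb S q \<Longrightarrow> bool_comb S (And p q)"
| disj: "bool_comb S p \<Longrightarrow> bool_comb S q \<Longrightarrow> bool_comb S (Or p q)"
| imp: "bool_comb S p \<Longrightarrow> bool_comb S q \<Longrightarrow> bool_comb S (Imp p q)"
| iff: "bool_comb S p \<Longrightarrow> bool_comb S q \<Longrightarrow> bool_comb S (Iff p q)"

definition Pn :: "fm set \<Rightarrow> nat \<Rightarrow> fm set" where
  "Pn P n = {p. \<exists>S. S \<subseteq> P \<and> finite S \<and> card S \<le> n \<and> bool_comb S p}"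

end

theory Submission
  imports Defs
begin

definition mapM :: "(bool \<Rightarrow> bool) \<Rightarrow> struc \<Rightarrow> struc" where
  "mapM g M = Struc (dom M) (\<lambda>(s,b). funs M (s, g b)) (\<lambda>(s,b). rels M (s, g b))"

lemma mapM_sel[simp]: "dom (mapM g M) = dom M" "funs (mapM g M) (s,b) = funs M (s, g b)"
  "rels (mapM g M) (s,b) = rels M (s, g b)"
  by (auto simp: mapM_def)

lemma mapM_comp: "mapM g (mapM h M) = mapM (h \<circ> g) M"
  by (simp add: mapM_def)

lemma mapM_id: "mapM (\<lambda>b. b) M = M"
  by (cases M) (simp add: mapM_def)

lemma evalt_map: "evalt M v (map_syms_t g t) = evalt (mapM g M) v t"
  by (induction g t rule: map_syms_t.induct) (auto cong: map_cong)

lemma sat_map: "sat M v (map_syms g p) = sat (mapM g M) v p"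
  by (induction g p arbitrary: v rule: map_syms.induct) (auto simp: evalt_map cong: map_cong)

lemma is_struc_mapM: "is_struc M \<Longrightarrow> is_struc (mapM g M)"
  unfolding is_struc_def by (auto simp: mapM_def split: prod.splits)

lemma map_t_unp: "trm_over (A \<times> {False}) t \<Longrightarrow> map_syms_t (\<lambda>_. False) t = t"
  by (induction "\<lambda>_::bool. False" t rule: map_syms_t.induct) (auto simp: map_idI)

lemma map_unp: "fm_over (A \<times> {False}) (B \<times> {False}) p \<Longrightarrow> map_syms (\<lambda>_. False) p = p"
  by (induction "\<lambda>_::bool. False" p rule: map_syms.induct) (auto intro!: map_idI map_t_unp)

lemma cfm_unp: "cfm \<Sigma> p \<Longrightarrow> map_syms (\<lambda>_. False) p = p"
  unfolding cfm_def over_def unprimed_def using map_unp by blast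

lemma cfm_sat_eq: "cfm \<Sigma> p \<Longrightarrow> mapM (\<lambda>_. False) M = mapM (\<lambda>_. False) N \<Longrightarrow> sat M v p = sat N v p"
  by (metis cfm_unp sat_map)

lemma fvt_map: "fvt (map_syms_t g t) = fvt t"
  by (induction g t rule: map_syms_t.induct) auto

lemma fv_map: "fv (map_syms g p) = fv p"
  by (induction g p rule: map_syms.induct) (auto simp: fvt_map)

lemma trm_over_map: "trm_over A t \<Longrightarrow> (\<forall>s b. (s,b)\<in>A \<longrightarrow> (s, g b) \<in> A') \<Longrightarrow> trm_over A' (map_syms_t g t)"
  by (induction g t rule: map_syms_t.induct) auto

lemma fm_over_map: "fm_over A B p \<Longrightarrow> (\<forall>s b. (s,b)\<in>A \<longrightarrow> (s, g b) \<in> A') \<Longrightarrow> (\<forall>s b. (s,b)\<in>B \<longrightarrow> (s, g b) \<in> B') \<Longrightarrow> fm_over A' B' (map_syms g p)"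
  by (induction g p rule: map_syms.induct) (auto simp: trm_over_map)

lemma over2_map: "over2 \<Sigma> p \<Longrightarrow> over2 \<Sigma> (map_syms g p)"
  unfolding over2_def both_def by (erule fm_over_map) auto

lemma over_over2_map: "over \<Sigma> p \<Longrightarrow> over2 \<Sigma> (map_syms g p)"
  unfolding over2_def over_def both_def unprimed_def by (erule fm_over_map) auto

definition good :: "struc \<Rightarrow> (nat \<Rightarrow> nat) \<Rightarrow> bool" where
  "good M v \<longleftrightarrow> is_struc M \<and> range v \<subseteq> dom M"

lemma good_mapM: "good M v \<Longrightarrow> good (mapM g M) v"
  by (simp add: good_def is_struc_mapM)

lemma entailsD: "entails A B \<Longrightarrow> good M v \<Longrightarrow> sat M v A \<Longrightarrow> sat M v B"
  by (simp add: entails_def valid_def good_def)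

lemma entailsI: "(\<And>M v. good M v \<Longrightarrow> sat M v A \<Longrightarrow> sat M v B) \<Longrightarrow> entails A B"
  by (simp add: entails_def valid_def good_def)

inductive R :: "fm set \<Rightarrow> fm \<Rightarrow> fm \<Rightarrow> struc \<Rightarrow> (nat \<Rightarrow> nat) \<Rightarrow> bool"
  for \<Phi> \<iota> \<tau> where
  init: "good M v \<Longrightarrow> sat M v \<iota> \<Longrightarrow> R \<Phi> \<iota> \<tau> M v"
| jump: "R \<Phi> \<iota> \<tau> M v \<Longrightarrow> good N w \<Longrightarrow> (\<forall>\<phi>\<in>\<Phi>. sat M v \<phi> = sat N w \<phi>) \<Longrightarrow> R \<Phi> \<iota> \<tau> N w"
| step: "R \<Phi> \<iota> \<tau> M v \<Longrightarrow> sat M v \<tau> \<Longrightarrow> R \<Phi> \<iota> \<tau> (mapM (\<lambda>_. True) M) v"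

lemma R_good: "R \<Phi> \<iota> \<tau> M v \<Longrightarrow> good M v"
  by (induction rule: R.induct) (auto simp: good_mapM)

lemma R_mono: "R \<Phi> \<iota> \<tau> M v \<Longrightarrow> \<Phi>' \<subseteq> \<Phi> \<Longrightarrow> R \<Phi>' \<iota> \<tau> M v"
proof (induction rule: R.induct)
  case (init M v) then show ?case by (auto intro: R.init)
next
  case (jump M v N w) then show ?case by (meson R.jump subsetD)
next
  case (step M v) then show ?case by (simp add: R.step)
qed

definition safe :: "fm set \<Rightarrow> prob \<Rightarrow> bool" where
  "safe \<Phi> \<Pi> \<longleftrightarrow> (case \<Pi> of (\<iota>, \<tau>, \<beta>) \<Rightarrow> \<forall>M v. R \<Phi> \<iota> \<tau> M v \<longrightarrow> \<not> sat M v \<beta>)"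

lemma safe_mono: "safe \<Phi> \<Pi> \<Longrightarrow> \<Phi> \<subseteq> \<Phi>' \<Longrightarrow> safe \<Phi>' \<Pi>"
  unfolding safe_def by (auto split: prod.splits dest: R_mono)

lemma safe_ind:
  assumes "\<phi> \<in> \<Phi>" "entails \<iota> \<phi>" "entails (And \<phi> \<tau>) (prime \<phi>)"
  shows "safe \<Phi> (\<iota>, \<tau>, Not \<phi>)"
proof -
  have "R \<Phi> \<iota> \<tau> M v \<Longrightarrow> sat M v \<phi>" for M v
  proof (induction rule: R.induct)
    case (init M v) then show ?case using assms(2) entailsD by blast
  next
    case (jump M v N w) then show ?case using assms(1) by blast
  next
    case (step M v)
    then have "sat M v (prime \<phi>)" using assms(3) entailsD R_good by fastforce
    then show ?case by (simp add: prime_def sat_map)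
  qed
  then show ?thesis unfolding safe_def by auto
qed

lemma safe_cons:
  assumes "safe \<Phi> (\<iota>, \<tau>, Not \<phi>)" "entails \<phi> (Not \<beta>)"
  shows "safe \<Phi> (\<iota>, \<tau>, \<beta>)"
  using assms unfolding safe_def by (auto dest: R_good entailsD)

lemma safe_inc:
  assumes "safe \<Phi>1 (\<iota>, \<tau>, Not \<phi>)" "safe \<Phi>2 (And \<iota> \<phi>, And \<tau> (And \<phi> (prime \<phi>)), And \<beta> \<phi>)"
  shows "safe (\<Phi>1 \<union> \<Phi>2) (\<iota>, \<tau>, \<beta>)"
proof -
  let ?\<Phi> = "\<Phi>1 \<union> \<Phi>2"
  have ph: "R ?\<Phi> \<iota> \<tau> M v \<Longrightarrow> sat M v \<phi>" for M v
    using assms(1) R_mono[of ?\<Phi> \<iota> \<tau> M v \<Phi>1] unfolding safe_def by auto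
  have "R ?\<Phi> \<iota> \<tau> M v \<Longrightarrow> R \<Phi>2 (And \<iota> \<phi>) (And \<tau> (And \<phi> (prime \<phi>))) M v" for M v
  proof (induction rule: R.induct)
    case (init M v) then show ?case using ph R.init R.intros(1) by (simp add: R.init)
  next
    case (jump M v N w)
    then show ?case by (meson R.jump UnCI)
  next
    case (step M v)
    have "sat M v \<phi>" using ph step by blast
    moreover have "sat M v (prime \<phi>)"
      using ph[OF R.step[OF step(1,2)]] by (simp add: prime_def sat_map)
    ultimately show ?case using step R.step by fastforce
  qed
  then show ?thesis using assms(2) ph unfolding safe_def by fastforce
qed

lemma swap_swap_M: "mapM (\<lambda>b. \<not> b) (mapM (\<lambda>b. \<not> b) M) = M"
proof -
  have "((\<lambda>b. \<not> b) \<circ> (\<lambda>b. \<not> b)) = (\<lambda>b::bool. b)" by auto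
  then show ?thesis by (simp add: mapM_comp mapM_id)
qed

lemma R_rev:
  assumes cf: "\<forall>\<phi>\<in>\<Phi>. cfm \<Sigma> \<phi>"
  shows "R \<Phi> \<iota> \<tau> M v \<Longrightarrow> R \<Phi> \<beta> (swap \<tau>) M v \<Longrightarrow> \<exists>N w. R \<Phi> \<beta> (swap \<tau>) N w \<and> sat N w \<iota>"
proof (induction rule: R.induct)
  case (init M v) then show ?case by blast
next
  case (jump M v N w)
  have "R \<Phi> \<beta> (swap \<tau>) M v"
    using R.jump[OF jump(5) R_good[OF jump(1)]] jump(3) by auto
  then show ?case using jump(4) by blast
next
  case (step M v)
  let ?S = "mapM (\<lambda>b. \<not> b) M"
  have e1: "mapM (\<lambda>_. False) (mapM (\<lambda>_. True) M) = mapM (\<lambda>_. False) ?S"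
    by (simp add: mapM_comp comp_def)
  have "R \<Phi> \<beta> (swap \<tau>) ?S v"
    using R.jump[OF step(4) good_mapM[OF R_good[OF step(1)]]] cf cfm_sat_eq[OF _ e1] by blast
  moreover have "sat ?S v (swap \<tau>)"
    using step(2) by (simp add: swap_def sat_map swap_swap_M)
  ultimately have "R \<Phi> \<beta> (swap \<tau>) (mapM (\<lambda>_. True) ?S) v" by (rule R.step)
  moreover have "mapM (\<lambda>_. False) (mapM (\<lambda>_. True) ?S) = mapM (\<lambda>_. False) M"
    by (simp add: mapM_comp comp_def)
  ultimately have "R \<Phi> \<beta> (swap \<tau>) M v"
    using R.jump[OF _ R_good[OF step(1)]] cf cfm_sat_eq by blast
  then show ?case using step(3) by blast
qed

lemma safe_rev:
  assumes "\<forall>\<phi>\<in>\<Phi>. cfm \<Sigma> \<phi>" "safe \<Phi> (\<beta>, swap \<tau>, \<iota>)"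
  shows "safe \<Phi> (\<iota>, \<tau>, \<beta>)"
  unfolding safe_def
proof (clarsimp)
  fix M v assume a: "R \<Phi> \<iota> \<tau> M v" "sat M v \<beta>"
  have "R \<Phi> \<beta> (swap \<tau>) M v" using R.init[OF R_good[OF a(1)] a(2)] .
  then obtain N w where "R \<Phi> \<beta> (swap \<tau>) N w" "sat N w \<iota>" using R_rev[OF assms(1) a(1)] by blast
  then show False using assms(2) unfolding safe_def by auto
qed

lemma derivable_safe:
  "derivable Rs \<Sigma> P \<Pi> k \<Longrightarrow> \<exists>\<Phi>. finite \<Phi> \<and> card \<Phi> \<le> k \<and> \<Phi> \<subseteq> P \<and> (\<forall>\<phi>\<in>\<Phi>. cfm \<Sigma> \<phi>) \<and> safe \<Phi> \<Pi>"
proof (induction rule: derivable.induct)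
  case (ind \<phi> \<iota> \<tau>)
  then show ?case by (intro exI[of _ "{\<phi>}"]) (auto intro: safe_ind)
next
  case (cons \<phi> \<iota> \<tau> \<beta> k)
  then show ?case using safe_cons by blast
next
  case (inc \<phi> \<iota> \<tau> \<beta> k1 k2)
  then obtain \<Phi>1 \<Phi>2 where a: "finite \<Phi>1" "card \<Phi>1 \<le> k1" "\<Phi>1 \<subseteq> P" "\<forall>\<phi>\<in>\<Phi>1. cfm \<Sigma> \<phi>" "safe \<Phi>1 (\<iota>, \<tau>, Not \<phi>)"
    and b: "finite \<Phi>2" "card \<Phi>2 \<le> k2" "\<Phi>2 \<subseteq> P" "\<forall>\<phi>\<in>\<Phi>2. cfm \<Sigma> \<phi>"
      "safe \<Phi>2 (And \<iota> \<phi>, And \<tau> (And \<phi> (prime \<phi>)), And \<beta> \<phi>)" by blast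
  have "card (\<Phi>1 \<union> \<Phi>2) \<le> k1 + k2" using card_Un_le[of \<Phi>1 \<Phi>2] a b by linarith
  then show ?case using a b safe_inc[OF a(5) b(5)] by (intro exI[of _ "\<Phi>1 \<union> \<Phi>2"]) auto
next
  case (rev \<iota> \<tau> \<beta> k)
  then show ?case using safe_rev by blast
qed

lemma derivable_problem: "derivable Rs \<Sigma> P \<Pi> k \<Longrightarrow> is_problem \<Sigma> \<Pi>"
  by (induction rule: derivable.induct) auto

lemma derivable_sound:
  "derivable Rs \<Sigma> P (\<iota>, \<tau>, \<beta>) k \<Longrightarrow> good M v \<Longrightarrow> sat M v \<iota> \<Longrightarrow> \<not> sat M v \<beta>"
  using derivable_safe[of Rs \<Sigma> P "(\<iota>, \<tau>, \<beta>)" k] unfolding safe_def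
  by (auto dest!: spec[of _ M] dest: R.init[of M v \<iota>])

lemma no_rev:
  "derivable Rs \<Sigma> P \<Pi> k \<Longrightarrow> RRev \<notin> Rs \<Longrightarrow> good M v \<Longrightarrow> sat M v (fst \<Pi>) \<Longrightarrow> \<forall>\<phi>\<in>P. \<not> sat M v \<phi> \<Longrightarrow> False"
proof (induction rule: derivable.induct)
  case (ind \<phi> \<iota> \<tau>) then show ?case using entailsD by fastforce
next
  case (cons \<phi> \<iota> \<tau> \<beta> k) then show ?case by simp
next
  case (inc \<phi> \<iota> \<tau> \<beta> k1 k2)
  have "sat M v \<phi>" using derivable_sound[OF inc(4)] inc by fastforce
  then show ?case using inc by simp
next
  case (rev \<iota> \<tau> \<beta> k) then show ?case by simp
qed


definition conjL :: "(fm \<Rightarrow> fm) \<Rightarrow> fm list \<Rightarrow> fm" where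
  "conjL f xs = foldr (\<lambda>\<phi> acc. And (f \<phi>) acc) xs FTrue"

definition disjL :: "('a \<Rightarrow> fm) \<Rightarrow> 'a list \<Rightarrow> fm" where
  "disjL f xs = foldr (\<lambda>\<phi> acc. Or (f \<phi>) acc) xs FFalse"

lemma sat_conjL: "sat M v (conjL f xs) \<longleftrightarrow> (\<forall>\<phi>\<in>set xs. sat M v (f \<phi>))"
  by (induction xs) (auto simp: conjL_def)

lemma sat_disjL: "sat M v (disjL f xs) \<longleftrightarrow> (\<exists>\<phi>\<in>set xs. sat M v (f \<phi>))"
  by (induction xs) (auto simp: disjL_def)

lemma bc_conjL: "(\<forall>\<phi>\<in>set xs. bool_comb S (f \<phi>)) \<Longrightarrow> bool_comb S (conjL f xs)"
  by (induction xs) (auto simp: conjL_def intro: bool_comb.intros)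

lemma bc_disjL: "(\<forall>\<phi>\<in>set xs. bool_comb S (f \<phi>)) \<Longrightarrow> bool_comb S (disjL f xs)"
  by (induction xs) (auto simp: disjL_def intro: bool_comb.intros)

lemma bc_cfm: "bool_comb S p \<Longrightarrow> \<forall>q\<in>S. cfm \<Sigma> q \<Longrightarrow> cfm \<Sigma> p"
  by (induction rule: bool_comb.induct) (auto simp: cfm_def closed_def over_def)

lemma part1:
  assumes d: "derivable Rs \<Sigma> P \<Pi> k" and kn: "k \<le> n"
  shows "provable sysF \<Sigma> (Pn P n) \<Pi>"
proof -
  obtain \<Phi> where \<Phi>: "finite \<Phi>" "card \<Phi> \<le> k" "\<Phi> \<subseteq> P" "\<forall>\<phi>\<in>\<Phi>. cfm \<Sigma> \<phi>" "safe \<Phi> \<Pi>"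
    using derivable_safe[OF d] by blast
  obtain \<iota> \<tau> \<beta> where \<Pi>: "\<Pi> = (\<iota>, \<tau>, \<beta>)" by (cases \<Pi>) auto
  have pr: "is_problem \<Sigma> (\<iota>, \<tau>, \<beta>)" using derivable_problem[OF d] \<Pi> by simp
  obtain xs where xs: "set xs = \<Phi>" using \<Phi>(1) finite_list by blast
  define RS where "RS = {S. S \<subseteq> \<Phi> \<and> (\<exists>M v. R \<Phi> \<iota> \<tau> M v \<and> S = {\<phi>\<in>\<Phi>. sat M v \<phi>})}"
  have "finite RS" unfolding RS_def using \<Phi>(1) by (rule rev_finite_subset[OF finite_Pow_iff[THEN iffD2]]) auto
  then obtain ys where ys: "set ys = RS" using finite_list by blast
  define cube where "cube S = conjL (\<lambda>\<phi>. if \<phi> \<in> S then \<phi> else Not \<phi>) xs" for S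
  define \<psi> where "\<psi> = disjL cube ys"
  have key: "sat M v \<psi> \<longleftrightarrow> R \<Phi> \<iota> \<tau> M v" if g: "good M v" for M v
  proof
    assume "sat M v \<psi>"
    then obtain S where S: "S \<in> RS" "\<forall>\<phi>\<in>\<Phi>. sat M v \<phi> \<longleftrightarrow> \<phi> \<in> S"
      unfolding \<psi>_def cube_def by (auto simp: sat_disjL sat_conjL ys xs split: if_splits)
    then obtain N w where "R \<Phi> \<iota> \<tau> N w" "S = {\<phi>\<in>\<Phi>. sat N w \<phi>}" unfolding RS_def by blast
    then show "R \<Phi> \<iota> \<tau> M v" using R.jump[OF _ g] S(2) by auto
  next
    assume r: "R \<Phi> \<iota> \<tau> M v"
    have "{\<phi>\<in>\<Phi>. sat M v \<phi>} \<in> RS" unfolding RS_def using r by blast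
    then show "sat M v \<psi>"
      unfolding \<psi>_def cube_def by (auto simp: sat_disjL sat_conjL ys xs intro!: bexI[of _ "{\<phi>\<in>\<Phi>. sat M v \<phi>}"])
  qed
  have bc: "bool_comb \<Phi> \<psi>"
    unfolding \<psi>_def cube_def by (auto intro!: bc_disjL bc_conjL simp: xs bool_comb.atom bool_comb.neg)
  have cf: "cfm \<Sigma> \<psi>" using bc_cfm[OF bc \<Phi>(4)] .
  have inP: "\<psi> \<in> Pn P n" unfolding Pn_def using bc \<Phi> kn by auto
  have e1: "entails \<iota> \<psi>" by (rule entailsI) (simp add: key R.init)
  have e2: "entails (And \<psi> \<tau>) (prime \<psi>)"
  proof (rule entailsI)
    fix M v assume g: "good M v" and s: "sat M v (And \<psi> \<tau>)"
    then have "R \<Phi> \<iota> \<tau> (mapM (\<lambda>_. True) M) v" using key R.step by auto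
    then show "sat M v (prime \<psi>)" using key[OF good_mapM[OF g]] by (simp add: prime_def sat_map)
  qed
  have e3: "entails \<psi> (Not \<beta>)"
    using \<Phi>(5) \<Pi> by (intro entailsI) (auto simp: key safe_def)
  have pr2: "is_problem \<Sigma> (\<iota>, \<tau>, Not \<psi>)" using pr cf by (auto simp: is_problem_def cfm_def closed_def over_def)
  have "derivable sysF \<Sigma> (Pn P n) (\<iota>, \<tau>, Not \<psi>) 1"
    by (rule derivable.ind) (auto simp: sysF_def inP cf pr2 e1 e2)
  then have "derivable sysF \<Sigma> (Pn P n) (\<iota>, \<tau>, \<beta>) 1"
    by (intro derivable.cons[OF _ cf pr _ e3]) (auto simp: sysF_def)
  then show ?thesis using \<Pi> provable_def by blast
qed


definition \<Sigma>0 :: vocab where "\<Sigma>0 = ({}, UNIV)"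
definition pa :: "nat \<Rightarrow> fm" where "pa j = Rel ((j,0),False) []"

fun andl :: "nat \<Rightarrow> fm" where
  "andl 0 = FTrue" | "andl (Suc m) = And (andl m) (Not (pa m))"
fun orl :: "nat \<Rightarrow> fm" where
  "orl 0 = FFalse" | "orl (Suc m) = Or (orl m) (pa m)"

lemma cfm_simps[simp]: "cfm \<Sigma> (Not p) = cfm \<Sigma> p" "cfm \<Sigma> (And p q) = (cfm \<Sigma> p \<and> cfm \<Sigma> q)"
  "cfm \<Sigma> (Or p q) = (cfm \<Sigma> p \<and> cfm \<Sigma> q)" "cfm \<Sigma> FTrue" "cfm \<Sigma> FFalse"
  by (auto simp: cfm_def closed_def over_def)

lemma cfm_pa[simp]: "cfm \<Sigma>0 (pa j)"
  by (simp add: cfm_def closed_def over_def pa_def \<Sigma>0_def unprimed_def)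

lemma cfm_andl[simp]: "cfm \<Sigma>0 (andl m)" by (induction m) auto
lemma cfm_orl[simp]: "cfm \<Sigma>0 (orl m)" by (induction m) auto

lemma sat_pa: "sat M v (pa j) = rels M ((j,0),False) []" by (simp add: pa_def)
lemma sat_andl: "sat M v (andl m) \<longleftrightarrow> (\<forall>j<m. \<not> sat M v (pa j))"
  by (induction m) (auto simp: less_Suc_eq)
lemma sat_orl: "sat M v (orl m) \<longleftrightarrow> (\<exists>j<m. sat M v (pa j))"
  by (induction m) (auto simp: less_Suc_eq)

lemma closed_map: "closed (map_syms g p) = closed p" by (simp add: closed_def fv_map)

lemma prob_iff: "is_problem \<Sigma> (\<iota>, \<tau>, \<beta>) \<longleftrightarrow> cfm \<Sigma> \<iota> \<and> cfm \<Sigma> \<beta> \<and> closed \<tau> \<and> over2 \<Sigma> \<tau>"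
  by (simp add: is_problem_def)

lemma unsat_swap: "\<forall>M v. \<not> sat M v \<tau> \<Longrightarrow> \<not> sat M v (swap \<tau>)"
  by (simp add: swap_def sat_map)

lemma prob_back:
  assumes "is_problem \<Sigma> (\<iota>, \<tau>, \<beta>)" "cfm \<Sigma> \<phi>" "cfm \<Sigma> \<beta>'"
  shows "is_problem \<Sigma> (\<beta>', swap \<tau>, \<phi>)"
  using assms by (simp add: prob_iff swap_def closed_map over2_map)

lemma prob_fwd:
  assumes "is_problem \<Sigma> (\<iota>, \<tau>, \<beta>)" "cfm \<Sigma> \<phi>"
  shows "is_problem \<Sigma> (\<iota>, \<tau>, \<phi>)"
  using assms by (simp add: prob_iff)

lemma trm_over_mono: "trm_over A t \<Longrightarrow> A \<subseteq> A' \<Longrightarrow> trm_over A' t"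
  by (induction A t rule: trm_over.induct) auto

lemma fm_over_mono: "fm_over A B p \<Longrightarrow> A \<subseteq> A' \<Longrightarrow> B \<subseteq> B' \<Longrightarrow> fm_over A' B' p"
  by (induction A B p rule: fm_over.induct) (auto intro: trm_over_mono)

lemma over_over2: "over \<Sigma> p \<Longrightarrow> over2 \<Sigma> p"
  unfolding over_def over2_def unprimed_def both_def by (erule fm_over_mono) auto

lemma prob_step:
  assumes "is_problem \<Sigma> (\<iota>, \<tau>, \<beta>)" "cfm \<Sigma> \<phi>"
  shows "is_problem \<Sigma> (And \<iota> \<phi>, And \<tau> (And \<phi> (prime \<phi>)), And \<beta> \<phi>)"
proof -
  have o1: "over2 \<Sigma> (prime \<phi>)" unfolding prime_def
    by (rule over_over2_map) (use assms(2) in \<open>simp add: cfm_def\<close>)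
  have o2: "over2 \<Sigma> \<phi>" using over_over2 assms(2) by (simp add: cfm_def)
  have c1: "closed (prime \<phi>)" "closed \<phi>" using assms(2) by (simp_all add: prime_def closed_map cfm_def)
  show ?thesis using assms o1 o2 c1 by (simp add: prob_iff over2_def closed_def)
qed

lemma chain:
  assumes "Suc m \<le> N" "is_problem \<Sigma>0 (\<iota>, \<tau>, \<beta>)" "\<forall>M v. \<not> sat M v \<tau>"
    "entails \<beta> (orl (Suc m))" "\<forall>j<Suc m. entails \<iota> (Not (pa j))"
  shows "derivable sysFBI \<Sigma>0 (pa ` {..<N}) (\<iota>, \<tau>, \<beta>) (Suc m)"
  using assms
proof (induction m arbitrary: \<iota> \<tau> \<beta>)
  case 0
  have pb: "is_problem \<Sigma>0 (\<iota>, \<tau>, \<beta>)" using 0(2) .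
  have cb: "cfm \<Sigma>0 \<beta>" "cfm \<Sigma>0 \<iota>" using pb by (simp_all add: prob_iff)
  have p1: "is_problem \<Sigma>0 (\<beta>, swap \<tau>, Not (pa 0))" by (rule prob_back[OF pb]) (simp_all add: cb)
  have p2: "is_problem \<Sigma>0 (\<beta>, swap \<tau>, \<iota>)" by (rule prob_back[OF pb]) (simp_all add: cb)
  have e1: "entails \<beta> (pa 0)" using 0(4) by (auto intro!: entailsI dest: entailsD)
  have e2: "entails (And (pa 0) (swap \<tau>)) (prime (pa 0))"
    using unsat_swap[OF 0(3)] by (auto intro!: entailsI)
  have e3: "entails (pa 0) (Not \<iota>)" using 0(5) by (auto intro!: entailsI dest: entailsD)
  have inP: "pa 0 \<in> pa ` {..<N}" using 0(1) by simp
  have r: "RInd \<in> sysFBI" "RCons \<in> sysFBI" "RRev \<in> sysFBI" "RInc \<in> sysFBI" by (simp_all add: sysFBI_def)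
  have "derivable sysFBI \<Sigma>0 (pa ` {..<N}) (\<beta>, swap \<tau>, Not (pa 0)) 1"
    by (rule derivable.ind[OF r(1) inP cfm_pa p1 e1 e2])
  then have "derivable sysFBI \<Sigma>0 (pa ` {..<N}) (\<beta>, swap \<tau>, \<iota>) 1"
    by (rule derivable.cons[OF r(2) cfm_pa p2 _ e3])
  then have "derivable sysFBI \<Sigma>0 (pa ` {..<N}) (\<iota>, \<tau>, \<beta>) 1" by (rule derivable.rev[OF r(3) pb])
  then show ?case by simp
next
  case (Suc m)
  let ?q = "pa (Suc m)"
  let ?\<phi> = "Not ?q"
  have pb: "is_problem \<Sigma>0 (\<iota>, \<tau>, \<beta>)" using Suc(3) .
  have cb: "cfm \<Sigma>0 \<beta>" "cfm \<Sigma>0 \<iota>" using pb by (simp_all add: prob_iff)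
  have r: "RInd \<in> sysFBI" "RCons \<in> sysFBI" "RRev \<in> sysFBI" "RInc \<in> sysFBI" by (simp_all add: sysFBI_def)
  have p1: "is_problem \<Sigma>0 (Not ?\<phi>, swap \<tau>, Not ?q)" by (rule prob_back[OF pb]) simp_all
  have p2: "is_problem \<Sigma>0 (Not ?\<phi>, swap \<tau>, \<iota>)" by (rule prob_back[OF pb]) (simp_all add: cb)
  have p3: "is_problem \<Sigma>0 (\<iota>, \<tau>, Not ?\<phi>)" by (rule prob_fwd[OF pb]) simp
  have e1: "entails (Not ?\<phi>) ?q" by (auto intro!: entailsI)
  have e2: "entails (And ?q (swap \<tau>)) (prime ?q)"
    using unsat_swap[OF Suc(4)] by (auto intro!: entailsI)
  have e3: "entails ?q (Not \<iota>)"
  proof (rule entailsI)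
    fix M v assume "good M v" "sat M v ?q"
    then show "sat M v (Not \<iota>)" using entailsD[OF Suc(6)[rule_format, of "Suc m"]] by auto
  qed
  have inP: "?q \<in> pa ` {..<N}" using Suc(2) by simp
  have "derivable sysFBI \<Sigma>0 (pa ` {..<N}) (Not ?\<phi>, swap \<tau>, Not ?q) 1"
    by (rule derivable.ind[OF r(1) inP cfm_pa p1 e1 e2])
  then have "derivable sysFBI \<Sigma>0 (pa ` {..<N}) (Not ?\<phi>, swap \<tau>, \<iota>) 1"
    by (rule derivable.cons[OF r(2) cfm_pa p2 _ e3])
  then have d1: "derivable sysFBI \<Sigma>0 (pa ` {..<N}) (\<iota>, \<tau>, Not ?\<phi>) 1"
    by (rule derivable.rev[OF r(3) p3])
  have q1: "Suc m \<le> N" using Suc(2) by simp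
  have q2: "is_problem \<Sigma>0 (And \<iota> ?\<phi>, And \<tau> (And ?\<phi> (prime ?\<phi>)), And \<beta> ?\<phi>)"
    by (rule prob_step[OF pb]) simp
  have q3: "\<forall>M v. \<not> sat M v (And \<tau> (And ?\<phi> (prime ?\<phi>)))" using Suc(4) by simp
  have q4: "entails (And \<beta> ?\<phi>) (orl (Suc m))"
  proof (rule entailsI)
    fix M v assume "good M v" "sat M v (And \<beta> ?\<phi>)"
    then show "sat M v (orl (Suc m))" using entailsD[OF Suc(5), of M v] by auto
  qed
  have q5: "\<forall>j<Suc m. entails (And \<iota> ?\<phi>) (Not (pa j))"
  proof (intro allI impI entailsI)
    fix j M v assume "j < Suc m" "good M v" "sat M v (And \<iota> ?\<phi>)"
    then show "sat M v (Not (pa j))" using entailsD[OF Suc(6)[rule_format, of j]] by simp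
  qed
  have d2: "derivable sysFBI \<Sigma>0 (pa ` {..<N}) (And \<iota> ?\<phi>, And \<tau> (And ?\<phi> (prime ?\<phi>)), And \<beta> ?\<phi>) (Suc m)"
    by (rule Suc.IH[OF q1 q2 q3 q4 q5])
  have "derivable sysFBI \<Sigma>0 (pa ` {..<N}) (\<iota>, \<tau>, \<beta>) (1 + Suc m)"
    by (rule derivable.inc[OF r(4) _ pb d1 d2]) simp
  then show ?case by simp
qed

definition s0 :: struc where "s0 = Struc {0} (\<lambda>_ _. 0) (\<lambda>_ _. False)"
definition ee :: "nat \<Rightarrow> struc" where "ee i = Struc {0} (\<lambda>_ _. 0) (\<lambda>r _. r = ((i,0),False))"

lemma good_s0: "good s0 (\<lambda>_. 0)" by (auto simp: good_def is_struc_def s0_def)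
lemma good_ee: "good (ee i) (\<lambda>_. 0)" by (auto simp: good_def is_struc_def ee_def)

lemma part2:
  assumes n: "n > 0"
  shows "\<exists>\<Sigma> P \<Pi>. (\<forall>\<phi>\<in>P. closed \<phi>) \<and>
            provable_n sysFBI \<Sigma> P n \<Pi> \<and>
            \<not> provable_n sysFBI \<Sigma> P (n - 1) \<Pi> \<and>
            \<not> provable sysFI \<Sigma> P \<Pi> \<and>
            \<not> provable sysF \<Sigma> P \<Pi>"
proof -
  define P where "P = pa ` {..<n}"
  define \<Pi> where "\<Pi> = (andl n, FFalse, orl n)"
  have c1: "\<forall>\<phi>\<in>P. closed \<phi>" unfolding P_def using cfm_pa cfm_def by blast
  have pr: "is_problem \<Sigma>0 (andl n, FFalse, orl n)" by (simp add: prob_iff closed_def over2_def)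
  obtain m where m: "n = Suc m" using n gr0_implies_Suc by blast
  have a: "entails (orl n) (orl (Suc m))" using m by (auto intro!: entailsI)
  have b: "\<forall>j<Suc m. entails (andl n) (Not (pa j))"
  proof (intro allI impI entailsI)
    fix j M v assume "j < Suc m" "good M v" "sat M v (andl n)"
    then show "sat M v (Not (pa j))" using m sat_andl[of M v n] by auto
  qed
  have "derivable sysFBI \<Sigma>0 P \<Pi> (Suc m)"
    unfolding P_def \<Pi>_def by (rule chain[OF _ pr _ a b]) (auto simp: m)
  then have c2: "provable_n sysFBI \<Sigma>0 P n \<Pi>" unfolding provable_n_def m by blast
  have s0i: "sat s0 (\<lambda>_. 0) (andl n)" by (simp add: sat_andl sat_pa s0_def)
  have s0P: "\<forall>\<phi>\<in>P. \<not> sat s0 (\<lambda>_. 0) \<phi>" unfolding P_def by (auto simp: sat_pa s0_def)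
  have c3: "\<not> provable Rs \<Sigma>0 P \<Pi>" if "RRev \<notin> Rs" for Rs
  proof
    assume "provable Rs \<Sigma>0 P \<Pi>"
    then obtain k where "derivable Rs \<Sigma>0 P \<Pi> k" unfolding provable_def by blast
    from no_rev[OF this that good_s0] show False using s0i s0P unfolding \<Pi>_def by simp
  qed
  have c4: "\<not> provable_n sysFBI \<Sigma>0 P (n - 1) \<Pi>"
  proof
    assume "provable_n sysFBI \<Sigma>0 P (n - 1) \<Pi>"
    then obtain k where k: "k \<le> n - 1" "derivable sysFBI \<Sigma>0 P \<Pi> k" unfolding provable_n_def by blast
    obtain \<Phi> where \<Phi>: "finite \<Phi>" "card \<Phi> \<le> k" "\<Phi> \<subseteq> P" "safe \<Phi> \<Pi>"
      using derivable_safe[OF k(2)] by blast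
    have "inj pa" by (auto simp: inj_def pa_def)
    then have cP: "card P = n" unfolding P_def by (simp add: card_image inj_on_subset)
    have "\<not> P \<subseteq> \<Phi>"
    proof
      assume "P \<subseteq> \<Phi>"
      then have "card P \<le> card \<Phi>" using \<Phi>(1) card_mono by blast
      then show False using cP \<Phi>(2) k(1) n by linarith
    qed
    then obtain i where i: "i < n" "pa i \<notin> \<Phi>" unfolding P_def by blast
    have r0: "R \<Phi> (andl n) FFalse s0 (\<lambda>_. 0)" by (rule R.init[OF good_s0 s0i])
    have "\<forall>\<phi>\<in>\<Phi>. sat s0 (\<lambda>_. 0) \<phi> = sat (ee i) (\<lambda>_. 0) \<phi>"
    proof
      fix \<phi> assume "\<phi> \<in> \<Phi>"
      then obtain j where "\<phi> = pa j" "j \<noteq> i" using \<Phi>(3) i(2) unfolding P_def by blast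
      then show "sat s0 (\<lambda>_. 0) \<phi> = sat (ee i) (\<lambda>_. 0) \<phi>" by (simp add: sat_pa s0_def ee_def)
    qed
    then have r1: "R \<Phi> (andl n) FFalse (ee i) (\<lambda>_. 0)" by (rule R.jump[OF r0 good_ee])
    have "sat (ee i) (\<lambda>_. 0) (orl n)" using i(1) by (auto simp: sat_orl sat_pa ee_def)
    then show False using \<Phi>(4) r1 unfolding safe_def \<Pi>_def by auto
  qed
  have "RRev \<notin> sysFI" "RRev \<notin> sysF" by (auto simp: sysFI_def sysF_def)
  then show ?thesis using c1 c2 c3 c4 by blast
qed

theorem theorem4p14:
  shows "(\<forall>\<Sigma> P n \<Pi>. (\<forall>\<phi>\<in>P. closed \<phi>) \<longrightarrow>
            provable_n sysFBI \<Sigma> P n \<Pi> \<longrightarrow> provable sysF \<Sigma> (Pn P n) \<Pi>)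
       \<and> (\<forall>n::nat. n > 0 \<longrightarrow> (\<exists>\<Sigma> P \<Pi>. (\<forall>\<phi>\<in>P. closed \<phi>) \<and>
            provable_n sysFBI \<Sigma> P n \<Pi> \<and>
            \<not> provable_n sysFBI \<Sigma> P (n - 1) \<Pi> \<and>
            \<not> provable sysFI \<Sigma> P \<Pi> \<and>
            \<not> provable sysF \<Sigma> P \<Pi>))"
proof (intro conjI allI impI)
  fix \<Sigma> P n \<Pi>
  assume "provable_n sysFBI \<Sigma> P n \<Pi>"
  then obtain k where "k \<le> n" "derivable sysFBI \<Sigma> P \<Pi> k" unfolding provable_n_def by blast
  then show "provable sysF \<Sigma> (Pn P n) \<Pi>" using part1 by blast
next
  fix n :: nat assume "n > 0"
  then show "\<exists>\<Sigma> P \<Pi>. (\<forall>\<phi>\<in>P. closed \<phi>) \<and>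
            provable_n sysFBI \<Sigma> P n \<Pi> \<and>
            \<not> provable_n sysFBI \<Sigma> P (n - 1) \<Pi> \<and>
            \<not> provable sysFI \<Sigma> P \<Pi> \<and>
            \<not> provable sysF \<Sigma> P \<Pi>" by (rule part2)
qed

end
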